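(* Let $a_1,\dots,a_5$ and $\alpha_1,\dots,\alpha_5$ be positive real numbers with $\sum_{i=1}^5\alpha_i=\pi$. Then $$\sum_{i=1}^5 a_i\cos\alpha_i\;\le\;\frac{1+\sqrt5}{4}\cdot\frac{1}{a_1a_2a_3a_4a_5}\left(a_1^2a_2^2a_3^2+a_2^2a_3^2a_4^2+a_3^2a_4^2a_5^2+a_4^2a_5^2a_1^2+a_5^2a_1^2a_2^2\right).$$ *)

theory Defs
  imports Complex_Main
begin

end

theory Submission
  imports Defs
begin

lemma quadF:
  fixes y1 y2 y3 y4 y5 :: real
  shows "0 \<le> (1 + sqrt 5)/4 * (y1^2+y2^2+y3^2+y4^2+y5^2) + (y1*y2+y2*y3+y3*y4+y4*y5+y5*y1)"
proof -
  define s where "s = sqrt 5"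
  have s2: "s^2 = 5" unfolding s_def by simp
  have s0: "s > 1" unfolding s_def by (simp add: real_less_rsqrt)
  have id0: "4*(1+s)*(y1^2+y2^2+y3^2+y4^2+y5^2) + 16*(y1*y2+y2*y3+y3*y4+y4*y5+y5*y1)
     = (1+s)*(2*y1 + (s-1)*y2 + (s-1)*y5)^2 + 2*(2*y2 + 2*y3 - (s-1)*y5)^2
       + (s-1)*(2*y3 + (1+s)*y4 + 2*y5)^2"
  proof -
    have ss: "\<And>x. s*(s*x) = 5*x" using s2 by (metis mult.assoc power2_eq_square)
    show ?thesis by (simp add: power2_eq_square algebra_simps ss)
  qed
  have id: "(1 + s)/4 * (y1^2+y2^2+y3^2+y4^2+y5^2) + (y1*y2+y2*y3+y3*y4+y4*y5+y5*y1)
     = (1+s)/4 * (y1 + (s-1)/2*y2 + (s-1)/2*y5)^2 + 1/2 * (y2 + y3 - (s-1)/2*y5)^2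
       + (s-1)/4 * (y3 + (1+s)/2*y4 + y5)^2"
  proof -
    have "(1+s)/4 * (y1 + (s-1)/2*y2 + (s-1)/2*y5)^2 = (1+s)*(2*y1 + (s-1)*y2 + (s-1)*y5)^2/16"
      by (simp add: power2_eq_square field_simps)
    moreover have "1/2 * (y2 + y3 - (s-1)/2*y5)^2 = 2*(2*y2 + 2*y3 - (s-1)*y5)^2/16"
      by (simp add: power2_eq_square field_simps)
    moreover have "(s-1)/4 * (y3 + (1+s)/2*y4 + y5)^2 = (s-1)*(2*y3 + (1+s)*y4 + 2*y5)^2/16"
      by (simp add: power2_eq_square field_simps)
    ultimately show ?thesis using id0 by (simp add: field_simps)
  qed
  have "0 \<le> (1+s)/4 * (y1 + (s-1)/2*y2 + (s-1)/2*y5)^2 + 1/2 * (y2 + y3 - (s-1)/2*y5)^2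
       + (s-1)/4 * (y3 + (1+s)/2*y4 + y5)^2"
    using s0 by (intro add_nonneg_nonneg mult_nonneg_nonneg) auto
  then show ?thesis using id unfolding s_def by simp
qed

lemma cross:
  fixes x y t t' b :: real
  assumes "cos t' * cos t + sin t' * sin t = - cos b"
  shows "x * cos t * (y * cos t') + x * sin t * (y * sin t') = - (x * y * cos b)"
proof -
  have "x * cos t * (y * cos t') + x * sin t * (y * sin t') = x * y * (cos t' * cos t + sin t' * sin t)"
    by (simp add: algebra_simps)
  then show ?thesis using assms by simp
qed

lemma cyc:
  fixes w1 w2 w3 w4 w5 b1 b2 b3 b4 b5 :: real
  assumes "b1 + b2 + b3 + b4 + b5 = pi"
  shows "w1*w2*cos b1 + w2*w3*cos b2 + w3*w4*cos b3 + w4*w5*cos b4 + w5*w1*cos b5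
     \<le> (1 + sqrt 5)/4 * (w1^2+w2^2+w3^2+w4^2+w5^2)"
proof -
  define t1 :: real where "t1 = 0"
  define t2 where "t2 = t1 + (pi - b1)"
  define t3 where "t3 = t2 + (pi - b2)"
  define t4 where "t4 = t3 + (pi - b3)"
  define t5 where "t5 = t4 + (pi - b4)"
  have e5: "t5 - t1 = (b5 + pi) + 2*pi" using assms unfolding t5_def t4_def t3_def t2_def t1_def
    by simp
  have c1: "cos t2 * cos t1 + sin t2 * sin t1 = - cos b1"
    using cos_diff[of t2 t1] unfolding t2_def by simp
  have c2: "cos t3 * cos t2 + sin t3 * sin t2 = - cos b2"
    using cos_diff[of t3 t2] unfolding t3_def by simp
  have c3: "cos t4 * cos t3 + sin t4 * sin t3 = - cos b3"
    using cos_diff[of t4 t3] unfolding t4_def by simp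
  have c4: "cos t5 * cos t4 + sin t5 * sin t4 = - cos b4"
    using cos_diff[of t5 t4] unfolding t5_def by simp
  have c5: "cos t5 * cos t1 + sin t5 * sin t1 = - cos b5"
  proof -
    have "cos (t5 - t1) = cos ((b5 + pi) + 2*pi)" by (simp only: e5)
    also have "\<dots> = - cos b5" by (simp only: cos_periodic cos_periodic_pi)
    finally show ?thesis using cos_diff[of t5 t1] by simp
  qed
  have c5': "cos t1 * cos t5 + sin t1 * sin t5 = - cos b5" using c5 by (simp add: mult.commute)
  note P = quadF[of "w1 * cos t1" "w2 * cos t2" "w3 * cos t3" "w4 * cos t4" "w5 * cos t5"]
  note Qs = quadF[of "w1 * sin t1" "w2 * sin t2" "w3 * sin t3" "w4 * sin t4" "w5 * sin t5"]
  have sq: "(w * cos t)^2 + (w * sin t)^2 = w^2" for w t :: real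
  proof -
    have "(w * cos t)^2 + (w * sin t)^2 = w^2 * ((cos t)^2 + (sin t)^2)"
      by (simp only: power_mult_distrib distrib_left)
    then show ?thesis by (metis sin_cos_squared_add2 mult_1_right)
  qed
  have AB: "((w1 * cos t1)^2 + (w2 * cos t2)^2 + (w3 * cos t3)^2 + (w4 * cos t4)^2 + (w5 * cos t5)^2)
       + ((w1 * sin t1)^2 + (w2 * sin t2)^2 + (w3 * sin t3)^2 + (w4 * sin t4)^2 + (w5 * sin t5)^2)
       = w1^2+w2^2+w3^2+w4^2+w5^2"
    using sq[of w1 t1] sq[of w2 t2] sq[of w3 t3] sq[of w4 t4] sq[of w5 t5] by linarith
  have cAB: "(1 + sqrt 5)/4 * ((w1 * cos t1)^2 + (w2 * cos t2)^2 + (w3 * cos t3)^2 + (w4 * cos t4)^2 + (w5 * cos t5)^2)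
       + (1 + sqrt 5)/4 * ((w1 * sin t1)^2 + (w2 * sin t2)^2 + (w3 * sin t3)^2 + (w4 * sin t4)^2 + (w5 * sin t5)^2)
       = (1 + sqrt 5)/4 * (w1^2+w2^2+w3^2+w4^2+w5^2)"
    unfolding AB[symmetric] by (rule distrib_left[symmetric])
  have x1: "w1 * cos t1 * (w2 * cos t2) + w1 * sin t1 * (w2 * sin t2) = - (w1*w2*cos b1)"
    by (rule cross[OF c1])
  have x2: "w2 * cos t2 * (w3 * cos t3) + w2 * sin t2 * (w3 * sin t3) = - (w2*w3*cos b2)"
    by (rule cross[OF c2])
  have x3: "w3 * cos t3 * (w4 * cos t4) + w3 * sin t3 * (w4 * sin t4) = - (w3*w4*cos b3)"
    by (rule cross[OF c3])
  have x4: "w4 * cos t4 * (w5 * cos t5) + w4 * sin t4 * (w5 * sin t5) = - (w4*w5*cos b4)"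
    by (rule cross[OF c4])
  have x5: "w5 * cos t5 * (w1 * cos t1) + w5 * sin t5 * (w1 * sin t1) = - (w5*w1*cos b5)"
    by (rule cross[OF c5'])
  show ?thesis using P Qs cAB x1 x2 x3 x4 x5 by linarith
qed

theorem theorem2:
  fixes a1 a2 a3 a4 a5 \<alpha>1 \<alpha>2 \<alpha>3 \<alpha>4 \<alpha>5 :: real
  assumes "a1 > 0" "a2 > 0" "a3 > 0" "a4 > 0" "a5 > 0"
    and "\<alpha>1 > 0" "\<alpha>2 > 0" "\<alpha>3 > 0" "\<alpha>4 > 0" "\<alpha>5 > 0"
    and "\<alpha>1 + \<alpha>2 + \<alpha>3 + \<alpha>4 + \<alpha>5 = pi"
  shows "a1 * cos \<alpha>1 + a2 * cos \<alpha>2 + a3 * cos \<alpha>3 + a4 * cos \<alpha>4 + a5 * cos \<alpha>5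
    \<le> (1 + sqrt 5) / 4 * (1 / (a1 * a2 * a3 * a4 * a5)) *
       (a1^2 * a2^2 * a3^2 + a2^2 * a3^2 * a4^2 + a3^2 * a4^2 * a5^2
        + a4^2 * a5^2 * a1^2 + a5^2 * a1^2 * a2^2)"
proof -
  define T1 where "T1 = a1*a2*a3/(a4*a5)"
  define T2 where "T2 = a2*a3*a4/(a5*a1)"
  define T3 where "T3 = a3*a4*a5/(a1*a2)"
  define T4 where "T4 = a4*a5*a1/(a2*a3)"
  define T5 where "T5 = a5*a1*a2/(a3*a4)"
  have pos: "T1 > 0" "T2 > 0" "T3 > 0" "T4 > 0" "T5 > 0"
    using assms(1-5) unfolding T1_def T2_def T3_def T4_def T5_def by auto
  have sqa: "\<And>T U a. T * U = a^2 \<Longrightarrow> a > 0 \<Longrightarrow> sqrt T * sqrt U = a"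
    by (metis less_imp_le real_sqrt_mult real_sqrt_pow2_iff power2_eq_square real_sqrt_abs abs_of_pos)
  have p13: "sqrt T1 * sqrt T3 = a3"
    by (rule sqa) (use assms(1-5) in \<open>auto simp: T1_def T3_def field_simps power2_eq_square\<close>)
  have p35: "sqrt T3 * sqrt T5 = a5"
    by (rule sqa) (use assms(1-5) in \<open>auto simp: T5_def T3_def field_simps power2_eq_square\<close>)
  have p52: "sqrt T5 * sqrt T2 = a2"
    by (rule sqa) (use assms(1-5) in \<open>auto simp: T5_def T2_def field_simps power2_eq_square\<close>)
  have p24: "sqrt T2 * sqrt T4 = a4"
    by (rule sqa) (use assms(1-5) in \<open>auto simp: T2_def T4_def field_simps power2_eq_square\<close>)
  have p41: "sqrt T4 * sqrt T1 = a1"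
    by (rule sqa) (use assms(1-5) in \<open>auto simp: T4_def T1_def field_simps power2_eq_square\<close>)
  have R: "(1 / (a1 * a2 * a3 * a4 * a5)) *
       (a1^2 * a2^2 * a3^2 + a2^2 * a3^2 * a4^2 + a3^2 * a4^2 * a5^2
        + a4^2 * a5^2 * a1^2 + a5^2 * a1^2 * a2^2) = T1 + T2 + T3 + T4 + T5"
    using assms(1-5) unfolding T1_def T2_def T3_def T4_def T5_def
    by (simp add: field_simps power2_eq_square)
  have sq: "(sqrt T1)^2 = T1" "(sqrt T2)^2 = T2" "(sqrt T3)^2 = T3" "(sqrt T4)^2 = T4" "(sqrt T5)^2 = T5"
    using pos by auto
  have S: "\<alpha>3 + \<alpha>5 + \<alpha>2 + \<alpha>4 + \<alpha>1 = pi" using assms(11) by simp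
  have H: "sqrt T1 * sqrt T3 * cos \<alpha>3 + sqrt T3 * sqrt T5 * cos \<alpha>5 + sqrt T5 * sqrt T2 * cos \<alpha>2
      + sqrt T2 * sqrt T4 * cos \<alpha>4 + sqrt T4 * sqrt T1 * cos \<alpha>1
      \<le> (1 + sqrt 5)/4 * ((sqrt T1)^2 + (sqrt T3)^2 + (sqrt T5)^2 + (sqrt T2)^2 + (sqrt T4)^2)"
    by (rule cyc[OF S])
  have R': "(1 + sqrt 5) / 4 * (1 / (a1 * a2 * a3 * a4 * a5)) *
       (a1^2 * a2^2 * a3^2 + a2^2 * a3^2 * a4^2 + a3^2 * a4^2 * a5^2
        + a4^2 * a5^2 * a1^2 + a5^2 * a1^2 * a2^2) = (1 + sqrt 5)/4 * (T1 + T2 + T3 + T4 + T5)"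
    using R by (metis mult.assoc)
  have R2: "(1 + sqrt 5)/4 * (T1 + T3 + T5 + T2 + T4) = (1 + sqrt 5)/4 * (T1 + T2 + T3 + T4 + T5)"
    by (simp add: add_ac)
  show ?thesis using H R' R2 unfolding p13 p35 p52 p24 p41 sq by linarith
qed

end
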